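(* Let $R$ be a ring with multiplicative identity, let $D\subset \mathcal{M}(R)^N$ be a free set, and let $f:D\to\mathcal{M}(R)^{\hat N}$ be a free map. Then the following are equivalent: (1) For every $n$, every $X\in D\cap\mathcal{M}_n(R)^N$ and every $H\in\mathcal{M}_n(R)^N$ with $\begin{pmatrix}X&H\\0&X\end{pmatrix}\in D$, the equality $Df(X)[H]=0$ implies $H=0$ (i.e. $Df(X)$ is nonsingular at every $X\in D$). (2) $f$ is injective on $D$. (3) $f$ is injective, and its inverse $f^{-1}:f(D)\to D$ is a free map (in particular $f(D)$ is a free set).
   Context: $\mathcal{M}_n(R)$ denotes the $n\times n$ matrices over $R$ and $\mathcal{M}(R)^N=\bigcup_{n\ge1}\mathcal{M}_n(R)^N$ is the set of $N$-tuples of square matrices of a common size. For tuples, $(A_1,\dots,A_N)\oplus(B_1,\dots,B_N)=(A_1\oplus B_1,\dots,A_N\oplus B_N)$ and $S^{-1}(A_1,\dots,A_N)S=(S^{-1}A_1S,\dots,S^{-1}A_NS)$; block matrices of tuples such as $\begin{pmatrix}X&H\\0&X\end{pmatrix}$ are formed coordinatewise. A free set $D\subset\mathcal{M}(R)^N$ is one with: $A,B\in D\Rightarrow A\oplus B\in D$, and $A\in D\cap\mathcal{M}_n(R)^N$, $S\in GL_n(R)$ $\Rightarrow S^{-1}AS\in D$. A free map $f:D\to\mathcal{M}(R)^{\hat N}$ on a free set $D$ sends $D\cap \mathcal{M}_n(R)^N$ into $\mathcal{M}_n(R)^{\hat N}$ and satisfies $f(A\oplus B)=f(A)\oplus f(B)$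 and $f(S^{-1}AS)=S^{-1}f(A)S$. Derivative: for $X\in D\cap\mathcal{M}_n(R)^N$ and $H\in\mathcal{M}_n(R)^N$ with $\begin{pmatrix}X&H\\0&X\end{pmatrix}\in D$, one has (standing convention of the paper, used as the definition of the derivative) $f\begin{pmatrix}X&H\\0&X\end{pmatrix}=\begin{pmatrix}f(X)&Df(X)[H]\\0&f(X)\end{pmatrix}$, i.e. $Df(X)[H]$ is the upper-right $n\times n$ block of $f\begin{pmatrix}X&H\\0&X\end{pmatrix}$. *)

theory Defs
  imports "Jordan_Normal_Form.Matrix"
begin

text \<open>An N-tuple of n x n matrices over R is represented as a pair (n, As), where
  As is a list of length N of n x n matrices. The size n is recorded explicitly,
  so that M(R)^N is the disjoint union over n of M_n(R)^N.\<close>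

type_synonym 'a tup = "nat \<times> 'a mat list"

definition tuples :: "nat \<Rightarrow> 'a tup set" where
  "tuples N = {(n, As). length As = N \<and> (\<forall>A \<in> set As. A \<in> carrier_mat n n)}"

definition tsum :: "'a::zero tup \<Rightarrow> 'a tup \<Rightarrow> 'a tup" where
  "tsum X Y = (case X of (n, As) \<Rightarrow> case Y of (m, Bs) \<Rightarrow>
     (n + m, map2 (\<lambda>A B. four_block_mat A (0\<^sub>m n m) (0\<^sub>m m n) B) As Bs))"

text \<open>Coordinatewise similarity: tconj T S X = S^{-1} X S where T is the inverse of S.\<close>
definition tconj :: "'a::semiring_1 mat \<Rightarrow> 'a mat \<Rightarrow> 'a tup \<Rightarrow> 'a tup" where
  "tconj T S X = (fst X, map (\<lambda>A. T * A * S) (snd X))"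

definition tblock :: "'a::zero tup \<Rightarrow> 'a tup \<Rightarrow> 'a tup" where
  "tblock X H = (case X of (n, Xs) \<Rightarrow>
     (2 * n, map2 (\<lambda>A B. four_block_mat A B (0\<^sub>m n n) A) Xs (snd H)))"

definition tzero :: "nat \<Rightarrow> nat \<Rightarrow> 'a::zero tup" where
  "tzero N n = (n, replicate N (0\<^sub>m n n))"

definition free_set :: "nat \<Rightarrow> 'a::semiring_1 tup set \<Rightarrow> bool" where
  "free_set N D \<longleftrightarrow> D \<subseteq> tuples N
     \<and> (\<forall>A \<in> D. \<forall>B \<in> D. tsum A B \<in> D)
     \<and> (\<forall>A \<in> D. \<forall>S T. S \<in> carrier_mat (fst A) (fst A) \<and> T \<in> carrier_mat (fst A) (fst A)
          \<and> S * T = 1\<^sub>m (fst A) \<and> T * S = 1\<^sub>m (fst A) \<longrightarrow> tconj T S A \<in> D)"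

definition free_map :: "nat \<Rightarrow> nat \<Rightarrow> 'a::semiring_1 tup set \<Rightarrow> ('a tup \<Rightarrow> 'a tup) \<Rightarrow> bool" where
  "free_map N Nh D f \<longleftrightarrow> free_set N D
     \<and> (\<forall>A \<in> D. f A \<in> tuples Nh \<and> fst (f A) = fst A)
     \<and> (\<forall>A \<in> D. \<forall>B \<in> D. f (tsum A B) = tsum (f A) (f B))
     \<and> (\<forall>A \<in> D. \<forall>S T. S \<in> carrier_mat (fst A) (fst A) \<and> T \<in> carrier_mat (fst A) (fst A)
          \<and> S * T = 1\<^sub>m (fst A) \<and> T * S = 1\<^sub>m (fst A) \<longrightarrow> f (tconj T S A) = tconj T S (f A))"

definition Dfree :: "('a::zero tup \<Rightarrow> 'a tup) \<Rightarrow> 'a tup \<Rightarrow> 'a tup \<Rightarrow> 'a tup" where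
  "Dfree f X H = (let n = fst X in
     (n, map (\<lambda>B. mat n n (\<lambda>(i, j). B $$ (i, j + n))) (snd (f (tblock X H)))))"

end

theory Submission
  imports Defs
begin


lemma uminus_zero_mat: "- (0\<^sub>m n m) = (0\<^sub>m n m :: 'a::group_add mat)"
  by (intro eq_matI) auto

lemma add_uminus_mat': "(A::'a::group_add mat) \<in> carrier_mat n m \<Longrightarrow> A + - A = 0\<^sub>m n m"
  by (intro eq_matI) auto

lemma ST_inv:
  fixes G :: "'a::ring_1 mat"
  assumes G: "G \<in> carrier_mat n m"
  shows "four_block_mat (1\<^sub>m n) G (0\<^sub>m m n) (1\<^sub>m m) * four_block_mat (1\<^sub>m n) (-G) (0\<^sub>m m n) (1\<^sub>m m) = 1\<^sub>m (n+m)"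
    "four_block_mat (1\<^sub>m n) (-G) (0\<^sub>m m n) (1\<^sub>m m) * four_block_mat (1\<^sub>m n) G (0\<^sub>m m n) (1\<^sub>m m) = 1\<^sub>m (n+m)"
  using G by (subst mult_four_block_mat[of _ n n _ m _ m _ _ n _ m _ _], auto simp: uminus_zero_mat add_uminus_mat')+

lemma conj_block:
  fixes G :: "'a::ring_1 mat"
  assumes G: "G \<in> carrier_mat n m" and a: "a \<in> carrier_mat n n" and b: "b \<in> carrier_mat m m"
  shows "four_block_mat (1\<^sub>m n) (-G) (0\<^sub>m m n) (1\<^sub>m m) * four_block_mat a (0\<^sub>m n m) (0\<^sub>m m n) b
     * four_block_mat (1\<^sub>m n) G (0\<^sub>m m n) (1\<^sub>m m) = four_block_mat a (a * G - G * b) (0\<^sub>m m n) b"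
proof -
  have "four_block_mat (1\<^sub>m n) (-G) (0\<^sub>m m n) (1\<^sub>m m) * four_block_mat a (0\<^sub>m n m) (0\<^sub>m m n) b
     = four_block_mat a (- (G * b)) (0\<^sub>m m n) b"
    using G a b by (subst mult_four_block_mat[of _ n n _ m _ m _ _ n _ m _ _], auto)
  also have "\<dots> * four_block_mat (1\<^sub>m n) G (0\<^sub>m m n) (1\<^sub>m m) = four_block_mat a (a * G - G * b) (0\<^sub>m m n) b"
    using G a b by (subst mult_four_block_mat[of _ n n _ m _ m _ _ n _ m _ _], auto simp: minus_add_uminus_mat)
  finally show ?thesis .
qed

lemma block_ur:
  assumes "a \<in> carrier_mat n1 m1" "d \<in> carrier_mat n2 m2" "b \<in> carrier_mat n1 m2"
  shows "mat n1 m2 (\<lambda>(i,j). four_block_mat a b c d $$ (i, j + m1)) = b"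
  using assms by (intro eq_matI) auto

lemma block_eq:
  assumes c: "a \<in> carrier_mat n1 m1" "d \<in> carrier_mat n2 m2" "b \<in> carrier_mat n1 m2" "c \<in> carrier_mat n2 m1"
   "a' \<in> carrier_mat n1 m1" "d' \<in> carrier_mat n2 m2" "b' \<in> carrier_mat n1 m2" "c' \<in> carrier_mat n2 m1"
   and eq: "four_block_mat a b c d = four_block_mat a' b' c' d'"
  shows "a = a' \<and> b = b' \<and> c = c' \<and> d = d'"
proof -
  have E: "four_block_mat a b c d $$ (i,j) = four_block_mat a' b' c' d' $$ (i,j)" for i j
    by (simp only: eq)
  have "a = a'"
  proof (rule eq_matI)
    fix i j assume ij: "i < dim_row a'" "j < dim_col a'"
    show "a $$ (i,j) = a' $$ (i,j)" using E[of i j] ij c by simp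
  qed (use c in auto)
  moreover have "b = b'"
  proof (rule eq_matI)
    fix i j assume ij: "i < dim_row b'" "j < dim_col b'"
    show "b $$ (i,j) = b' $$ (i,j)" using E[of i "j + m1"] ij c by simp
  qed (use c in auto)
  moreover have "c = c'"
  proof (rule eq_matI)
    fix i j assume ij: "i < dim_row c'" "j < dim_col c'"
    show "c $$ (i,j) = c' $$ (i,j)" using E[of "i + n1" j] ij c by simp
  qed (use c in auto)
  moreover have "d = d'"
  proof (rule eq_matI)
    fix i j assume ij: "i < dim_row d'" "j < dim_col d'"
    show "d $$ (i,j) = d' $$ (i,j)" using E[of "i + n1" "j + m1"] ij c by simp
  qed (use c in auto)
  ultimately show ?thesis by simp
qed

lemma minus_zero_eq: "(X::'a::ring_1 mat) \<in> carrier_mat n m \<Longrightarrow> Y \<in> carrier_mat n m \<Longrightarrow> X - Y = 0\<^sub>m n m \<Longrightarrow> X = Y"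
proof (intro eq_matI)
  fix i j assume X: "X \<in> carrier_mat n m" and Y: "Y \<in> carrier_mat n m" and e: "X - Y = 0\<^sub>m n m"
    and ij: "i < dim_row Y" "j < dim_col Y"
  have "(X - Y) $$ (i,j) = 0" using e ij Y by simp
  thus "X $$ (i,j) = Y $$ (i,j)" using X Y ij by simp
qed (auto)

lemma conj_list:
  fixes G :: "'a::ring_1 mat"
  assumes "\<forall>a\<in>set As. a \<in> carrier_mat n n" "\<forall>b\<in>set Bs. b \<in> carrier_mat m m" "G \<in> carrier_mat n m"
  shows "map (\<lambda>M. four_block_mat (1\<^sub>m n) (-G) (0\<^sub>m m n) (1\<^sub>m m) * M * four_block_mat (1\<^sub>m n) G (0\<^sub>m m n) (1\<^sub>m m))
     (map2 (\<lambda>a b. four_block_mat a (0\<^sub>m n m) (0\<^sub>m m n) b) As Bs)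
   = map2 (\<lambda>a b. four_block_mat a (a * G - G * b) (0\<^sub>m m n) b) As Bs"
  unfolding map_map o_def
proof (intro map_cong refl)
  fix x assume x: "x \<in> set (zip As Bs)"
  obtain a b where ab: "x = (a, b)" by (cases x)
  have "a \<in> carrier_mat n n" "b \<in> carrier_mat m m" using x ab assms(1,2)
    by (auto dest: set_zip_leftD set_zip_rightD)
  thus "four_block_mat (1\<^sub>m n) (-G) (0\<^sub>m m n) (1\<^sub>m m) * (case x of (a, b) \<Rightarrow> four_block_mat a (0\<^sub>m n m) (0\<^sub>m m n) b) * four_block_mat (1\<^sub>m n) G (0\<^sub>m m n) (1\<^sub>m m)
     = (case x of (a, b) \<Rightarrow> four_block_mat a (a * G - G * b) (0\<^sub>m m n) b)"
    using ab conj_block[OF assms(3)] by simp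
qed

lemma tuples_mem: "(n, As) \<in> tuples N \<longleftrightarrow> length As = N \<and> (\<forall>A\<in>set As. A \<in> carrier_mat n n)"
  by (simp add: tuples_def)

lemma fval:
  assumes fm: "free_map N Nh D f" and A: "(n, As) \<in> D"
  shows "\<exists>As'. f (n, As) = (n, As') \<and> length As' = Nh \<and> (\<forall>a\<in>set As'. a \<in> carrier_mat n n)"
proof -
  have "f (n, As) \<in> tuples Nh" "fst (f (n,As)) = n" using fm A unfolding free_map_def by auto
  thus ?thesis by (cases "f (n, As)") (auto simp: tuples_mem)
qed

lemma Dmem:
  assumes fs: "free_set N D" and A: "(n, As) \<in> D"
  shows "length As = N \<and> (\<forall>a\<in>set As. a \<in> carrier_mat n n)"
  using fs A unfolding free_set_def by (auto simp: tuples_mem dest!: subsetD)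

lemma fsum: "free_map N Nh D f \<Longrightarrow> A \<in> D \<Longrightarrow> B \<in> D \<Longrightarrow> f (tsum A B) = tsum (f A) (f B)"
  unfolding free_map_def by blast

lemma key:
  fixes f :: "'a::ring_1 tup \<Rightarrow> 'a tup"
  assumes fm: "free_map N Nh D f" and A: "(n, As) \<in> D" and B: "(m, Bs) \<in> D" and G: "G \<in> carrier_mat n m"
  shows "(n+m, map2 (\<lambda>a b. four_block_mat a (a*G - G*b) (0\<^sub>m m n) b) As Bs) \<in> D \<and>
    f (n+m, map2 (\<lambda>a b. four_block_mat a (a*G - G*b) (0\<^sub>m m n) b) As Bs) =
    (n+m, map2 (\<lambda>a b. four_block_mat a (a*G - G*b) (0\<^sub>m m n) b) (snd (f (n, As))) (snd (f (m, Bs))))"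
proof -
  have fs: "free_set N D" using fm unfolding free_map_def by auto
  define S where "S = four_block_mat (1\<^sub>m n) G (0\<^sub>m m n) (1\<^sub>m m)"
  define T where "T = four_block_mat (1\<^sub>m n) (-G) (0\<^sub>m m n) (1\<^sub>m m)"
  have ST: "S \<in> carrier_mat (n+m) (n+m)" "T \<in> carrier_mat (n+m) (n+m)" "S * T = 1\<^sub>m (n+m)" "T * S = 1\<^sub>m (n+m)"
    using ST_inv[OF G] G unfolding S_def T_def by auto
  let ?P = "tsum (n, As) (m, Bs)"
  have P: "?P \<in> D" using fs A B unfolding free_set_def by auto
  have Pe: "?P = (n+m, map2 (\<lambda>a b. four_block_mat a (0\<^sub>m n m) (0\<^sub>m m n) b) As Bs)" by (simp add: tsum_def)
  have fst: "fst ?P = n + m" by (simp add: Pe)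
  have cA: "\<forall>a\<in>set As. a \<in> carrier_mat n n" and cB: "\<forall>b\<in>set Bs. b \<in> carrier_mat m m"
    using Dmem[OF fs A] Dmem[OF fs B] by auto
  have Ceq: "tconj T S ?P = (n+m, map2 (\<lambda>a b. four_block_mat a (a*G - G*b) (0\<^sub>m m n) b) As Bs)"
    unfolding Pe tconj_def using conj_list[OF cA cB G] by (simp add: S_def T_def)
  have CD: "tconj T S ?P \<in> D" using fs P ST fst unfolding free_set_def by auto
  obtain As' where As': "f (n, As) = (n, As')" "\<forall>a\<in>set As'. a \<in> carrier_mat n n" using fval[OF fm A] by auto
  obtain Bs' where Bs': "f (m, Bs) = (m, Bs')" "\<forall>a\<in>set Bs'. a \<in> carrier_mat m m" using fval[OF fm B] by auto
  have "f (tconj T S ?P) = tconj T S (f ?P)" using fm P ST fst unfolding free_map_def by auto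
  also have "f ?P = tsum (f (n,As)) (f (m,Bs))" using fm A B unfolding free_map_def by auto
  also have "tconj T S \<dots> = (n+m, map2 (\<lambda>a b. four_block_mat a (a*G - G*b) (0\<^sub>m m n) b) As' Bs')"
    unfolding As' Bs' tsum_def tconj_def using conj_list[OF As'(2) Bs'(2) G] by (simp add: S_def T_def)
  finally show ?thesis using CD Ceq As' Bs' by simp
qed

lemma intw:
  fixes f :: "'a::ring_1 tup \<Rightarrow> 'a tup"
  assumes fm: "free_map N Nh D f" and A: "(n, As) \<in> D" and B: "(m, Bs) \<in> D" and G: "G \<in> carrier_mat n m"
    and I: "\<forall>k < N. As!k * G = G * Bs!k" and j: "j < Nh"
  shows "snd (f (n, As)) ! j * G = G * snd (f (m, Bs)) ! j"
proof -
  have fs: "free_set N D" using fm unfolding free_map_def by auto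
  have cA: "length As = N" "\<forall>a\<in>set As. a \<in> carrier_mat n n" and cB: "length Bs = N" "\<forall>b\<in>set Bs. b \<in> carrier_mat m m"
    using Dmem[OF fs A] Dmem[OF fs B] by auto
  obtain As' where As': "f (n, As) = (n, As')" "length As' = Nh" "\<forall>a\<in>set As'. a \<in> carrier_mat n n" using fval[OF fm A] by auto
  obtain Bs' where Bs': "f (m, Bs) = (m, Bs')" "length Bs' = Nh" "\<forall>a\<in>set Bs'. a \<in> carrier_mat m m" using fval[OF fm B] by auto
  have "map2 (\<lambda>a b. four_block_mat a (a*G - G*b) (0\<^sub>m m n) b) As Bs
      = map2 (\<lambda>a b. four_block_mat a (0\<^sub>m n m) (0\<^sub>m m n) b) As Bs"
  proof (intro nth_equalityI)
    fix k assume "k < length (map2 (\<lambda>a b. four_block_mat a (a*G - G*b) (0\<^sub>m m n) b) As Bs)"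
    hence k: "k < N" using cA cB by simp
    have ck: "G * Bs!k \<in> carrier_mat n m" using G cB k by (intro mult_carrier_mat[of _ n m _ m]) auto
    have "As!k * G - G * Bs!k = 0\<^sub>m n m" using I k ck by simp
    thus "map2 (\<lambda>a b. four_block_mat a (a*G - G*b) (0\<^sub>m m n) b) As Bs ! k
      = map2 (\<lambda>a b. four_block_mat a (0\<^sub>m n m) (0\<^sub>m m n) b) As Bs ! k" using k cA cB by simp
  qed (simp add: cA cB)
  hence "tsum (n, As) (m, Bs) = (n+m, map2 (\<lambda>a b. four_block_mat a (a*G - G*b) (0\<^sub>m m n) b) As Bs)"
    by (simp add: tsum_def)
  hence e1: "f (tsum (n, As) (m, Bs)) = (n+m, map2 (\<lambda>a b. four_block_mat a (a*G - G*b) (0\<^sub>m m n) b) As' Bs')"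
    using key[OF fm A B G] As' Bs' by simp
  have e2: "f (tsum (n, As) (m, Bs)) = (n+m, map2 (\<lambda>a b. four_block_mat a (0\<^sub>m n m) (0\<^sub>m m n) b) As' Bs')"
    using fsum[OF fm A B] As' Bs' by (simp add: tsum_def)
  have XY: "map2 (\<lambda>a b. four_block_mat a (a*G - G*b) (0\<^sub>m m n) b) As' Bs'
      = map2 (\<lambda>a b. four_block_mat a (0\<^sub>m n m) (0\<^sub>m m n) b) As' Bs'"
    using trans[OF sym[OF e1] e2] by (simp only: prod.inject)
  have "map2 (\<lambda>a b. four_block_mat a (a*G - G*b) (0\<^sub>m m n) b) As' Bs' ! j
      = map2 (\<lambda>a b. four_block_mat a (0\<^sub>m n m) (0\<^sub>m m n) b) As' Bs' ! j" using XY by (rule arg_cong)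
  hence eqb: "four_block_mat (As'!j) (As'!j*G - G*Bs'!j) (0\<^sub>m m n) (Bs'!j)
       = four_block_mat (As'!j) (0\<^sub>m n m) (0\<^sub>m m n) (Bs'!j)" using j As' Bs' by simp
  have ca: "As'!j \<in> carrier_mat n n" and cb: "Bs'!j \<in> carrier_mat m m" using j As' Bs' by auto
  have cc: "As'!j*G - G*Bs'!j \<in> carrier_mat n m" using G \<open>As'!j \<in> carrier_mat n n\<close> \<open>Bs'!j \<in> carrier_mat m m\<close>
    by (intro minus_carrier_mat mult_carrier_mat[of _ n m _ m])
  have z: "As'!j*G - G*Bs'!j = 0\<^sub>m n m"
    using block_eq[OF ca cb cc zero_carrier_mat ca cb zero_carrier_mat zero_carrier_mat eqb] by (rule conjunct1[OF conjunct2])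
  have c1: "As'!j*G \<in> carrier_mat n m" using ca G by (rule mult_carrier_mat)
  have c2: "G*Bs'!j \<in> carrier_mat n m" using G cb by (rule mult_carrier_mat)
  have "As'!j*G = G*Bs'!j" by (rule minus_zero_eq[OF c1 c2 z])
  thus ?thesis using As' Bs' by simp
qed


lemma mult_fb:
  assumes "a \<in> carrier_mat n n" "b \<in> carrier_mat n n" "c \<in> carrier_mat n n" "d \<in> carrier_mat n n"
   "e \<in> carrier_mat n n" "f \<in> carrier_mat n n" "g \<in> carrier_mat n n" "h \<in> carrier_mat n n"
  shows "four_block_mat a b c d * four_block_mat e f g h = four_block_mat (a*e+b*g) (a*f+b*h) (c*e+d*g) (c*f+d*h)"
  by (rule mult_four_block_mat[of _ n n _ n _ n _ _ n _ n _ _]) (use assms in auto)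

lemma diagG:
  fixes p q :: "'a::ring_1 mat"
  assumes p: "p \<in> carrier_mat n n" and q: "q \<in> carrier_mat n n"
  shows "four_block_mat p (0\<^sub>m n n) (0\<^sub>m n n) q * four_block_mat (0\<^sub>m n n) (1\<^sub>m n) (0\<^sub>m n n) (0\<^sub>m n n)
   - four_block_mat (0\<^sub>m n n) (1\<^sub>m n) (0\<^sub>m n n) (0\<^sub>m n n) * four_block_mat p (0\<^sub>m n n) (0\<^sub>m n n) q
   = four_block_mat (0\<^sub>m n n) (p - q) (0\<^sub>m n n) (0\<^sub>m n n)"
proof -
  have 1: "four_block_mat p (0\<^sub>m n n) (0\<^sub>m n n) q * four_block_mat (0\<^sub>m n n) (1\<^sub>m n) (0\<^sub>m n n) (0\<^sub>m n n)
     = four_block_mat (0\<^sub>m n n) p (0\<^sub>m n n) (0\<^sub>m n n)"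
    using p q by (subst mult_fb[of _ n]) auto
  have 2: "four_block_mat (0\<^sub>m n n) (1\<^sub>m n) (0\<^sub>m n n) (0\<^sub>m n n) * four_block_mat p (0\<^sub>m n n) (0\<^sub>m n n) q
     = four_block_mat (0\<^sub>m n n) q (0\<^sub>m n n) (0\<^sub>m n n)"
    using p q by (subst mult_fb[of _ n]) auto
  show ?thesis unfolding 1 2 using p q by (intro eq_matI) auto
qed

lemma G1:
  fixes a h :: "'a::ring_1 mat"
  assumes a: "a \<in> carrier_mat n n" and h: "h \<in> carrier_mat n n"
  shows "four_block_mat a h (0\<^sub>m n n) a * four_block_mat (1\<^sub>m n) (0\<^sub>m n n) (0\<^sub>m n n) (0\<^sub>m n n)
    = four_block_mat (1\<^sub>m n) (0\<^sub>m n n) (0\<^sub>m n n) (0\<^sub>m n n) * four_block_mat a (0\<^sub>m n n) (0\<^sub>m n n) a"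
  using a h by (subst mult_fb[of _ n], auto, subst mult_fb[of _ n], auto)

lemma G2:
  fixes a h :: "'a::ring_1 mat"
  assumes a: "a \<in> carrier_mat n n" and h: "h \<in> carrier_mat n n"
  shows "four_block_mat a (0\<^sub>m n n) (0\<^sub>m n n) a * four_block_mat (0\<^sub>m n n) (0\<^sub>m n n) (0\<^sub>m n n) (1\<^sub>m n)
    = four_block_mat (0\<^sub>m n n) (0\<^sub>m n n) (0\<^sub>m n n) (1\<^sub>m n) * four_block_mat a h (0\<^sub>m n n) a"
  using a h by (subst mult_fb[of _ n], auto, subst mult_fb[of _ n], auto)

lemma G1r:
  fixes p q r s u :: "'a::ring_1 mat"
  assumes c: "p \<in> carrier_mat n n" "q \<in> carrier_mat n n" "r \<in> carrier_mat n n" "s \<in> carrier_mat n n" "u \<in> carrier_mat n n"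
    and e: "four_block_mat p q r s * four_block_mat (1\<^sub>m n) (0\<^sub>m n n) (0\<^sub>m n n) (0\<^sub>m n n)
    = four_block_mat (1\<^sub>m n) (0\<^sub>m n n) (0\<^sub>m n n) (0\<^sub>m n n) * four_block_mat u (0\<^sub>m n n) (0\<^sub>m n n) u"
  shows "p = u \<and> r = 0\<^sub>m n n"
proof -
  have "four_block_mat p (0\<^sub>m n n) r (0\<^sub>m n n) = four_block_mat u (0\<^sub>m n n) (0\<^sub>m n n) (0\<^sub>m n n)"
    using e c by (subst (asm) mult_fb[of _ n], auto, subst (asm) mult_fb[of _ n], auto)
  from block_eq[OF c(1) zero_carrier_mat zero_carrier_mat c(3) c(5) zero_carrier_mat zero_carrier_mat zero_carrier_mat this]
  show ?thesis by simp
qed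

lemma G2r:
  fixes p q r s u :: "'a::ring_1 mat"
  assumes c: "p \<in> carrier_mat n n" "q \<in> carrier_mat n n" "r \<in> carrier_mat n n" "s \<in> carrier_mat n n" "u \<in> carrier_mat n n"
    and e: "four_block_mat u (0\<^sub>m n n) (0\<^sub>m n n) u * four_block_mat (0\<^sub>m n n) (0\<^sub>m n n) (0\<^sub>m n n) (1\<^sub>m n)
    = four_block_mat (0\<^sub>m n n) (0\<^sub>m n n) (0\<^sub>m n n) (1\<^sub>m n) * four_block_mat p q r s"
  shows "s = u"
proof -
  have "four_block_mat (0\<^sub>m n n) (0\<^sub>m n n) (0\<^sub>m n n) u = four_block_mat (0\<^sub>m n n) (0\<^sub>m n n) r s"
    using e c by (subst (asm) mult_fb[of _ n], auto, subst (asm) mult_fb[of _ n], auto)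
  from block_eq[OF zero_carrier_mat c(5) zero_carrier_mat zero_carrier_mat zero_carrier_mat c(4) zero_carrier_mat c(3) this]
  show ?thesis by simp
qed


lemma part23:
  fixes D :: "'a::ring_1 tup set" and f :: "'a tup \<Rightarrow> 'a tup"
  assumes fm: "free_map N Nh D f" and inj: "inj_on f D"
  shows "free_map Nh N (f ` D) (the_inv_into D f)"
proof -
  let ?g = "the_inv_into D f"
  have fs: "free_set N D" using fm unfolding free_map_def by auto
  have gf: "?g (f A) = A" if "A \<in> D" for A using the_inv_into_f_f[OF inj that] .
  have ft: "f A \<in> tuples Nh" "fst (f A) = fst A" if "A \<in> D" for A using fm that unfolding free_map_def by auto
  have fc: "f (tconj T S A) = tconj T S (f A)" "tconj T S A \<in> D"
    if "A \<in> D" "S \<in> carrier_mat (fst A) (fst A)" "T \<in> carrier_mat (fst A) (fst A)" "S * T = 1\<^sub>m (fst A)" "T * S = 1\<^sub>m (fst A)" for A and S T :: "'a mat"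
    using fm fs that unfolding free_map_def free_set_def by auto
  have tD: "tsum A B \<in> D" if "A \<in> D" "B \<in> D" for A B using fs that unfolding free_set_def by auto
  have fsD: "free_set Nh (f ` D)"
    unfolding free_set_def
  proof (intro conjI ballI allI impI)
    show "f ` D \<subseteq> tuples Nh" using ft by auto
  next
    fix A' B' assume "A' \<in> f ` D" "B' \<in> f ` D"
    then obtain A B where "A \<in> D" "B \<in> D" "A' = f A" "B' = f B" by auto
    thus "tsum A' B' \<in> f ` D" using fsum[OF fm] tD by (metis image_eqI)
  next
    fix A' and S T :: "'a mat" assume A': "A' \<in> f ` D" and c: "S \<in> carrier_mat (fst A') (fst A') \<and> T \<in> carrier_mat (fst A') (fst A') \<and> S * T = 1\<^sub>m (fst A') \<and> T * S = 1\<^sub>m (fst A')"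
    then obtain A where A: "A \<in> D" "A' = f A" by auto
    hence "f (tconj T S A) = tconj T S A'" "tconj T S A \<in> D" using fc[of A S T] c ft(2)[OF A(1)] by auto
    thus "tconj T S A' \<in> f ` D" by (metis image_eqI)
  qed
  show ?thesis
    unfolding free_map_def
  proof (intro conjI ballI allI impI fsD)
    fix A' assume "A' \<in> f ` D"
    then obtain A where A: "A \<in> D" "A' = f A" by auto
    thus "?g A' \<in> tuples N" using gf fs unfolding free_set_def by auto
    show "fst (?g A') = fst A'" using A gf ft by auto
  next
    fix A' B' assume "A' \<in> f ` D" "B' \<in> f ` D"
    then obtain A B where A: "A \<in> D" "B \<in> D" "A' = f A" "B' = f B" by auto
    thus "?g (tsum A' B') = tsum (?g A') (?g B')" using fsum[OF fm A(1,2)] gf tD by metis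
  next
    fix A' and S T :: "'a mat" assume A': "A' \<in> f ` D" and c: "S \<in> carrier_mat (fst A') (fst A') \<and> T \<in> carrier_mat (fst A') (fst A') \<and> S * T = 1\<^sub>m (fst A') \<and> T * S = 1\<^sub>m (fst A')"
    then obtain A where A: "A \<in> D" "A' = f A" by auto
    hence "f (tconj T S A) = tconj T S A'" "tconj T S A \<in> D" using fc[of A S T] c ft(2)[OF A(1)] by auto
    thus "?g (tconj T S A') = tconj T S (?g A')" using gf A by metis
  qed
qed


lemma part12:
  fixes D :: "'a::ring_1 tup set" and f :: "'a tup \<Rightarrow> 'a tup"
  assumes fm: "free_map N Nh D f"
    and P: "\<forall>X \<in> D. \<forall>H \<in> tuples N. fst H = fst X \<longrightarrow> tblock X H \<in> D \<longrightarrow>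
              Dfree f X H = tzero Nh (fst X) \<longrightarrow> H = tzero N (fst X)"
  shows "inj_on f D"
proof (rule inj_onI)
  fix X Y assume X: "X \<in> D" and Y: "Y \<in> D" and fXY: "f X = f Y"
  have fs: "free_set N D" using fm unfolding free_map_def by auto
  obtain n Xs where Xe: "X = (n, Xs)" by (cases X)
  obtain n' Ys where Ye: "Y = (n', Ys)" by (cases Y)
  have "fst (f X) = n" "fst (f Y) = n'" using fm X Y Xe Ye unfolding free_map_def by auto
  hence nn: "n' = n" using fXY by simp
  have X': "(n, Xs) \<in> D" and Y': "(n, Ys) \<in> D" using X Y Xe Ye nn by auto
  have cX: "length Xs = N" "\<forall>a\<in>set Xs. a \<in> carrier_mat n n" using Dmem[OF fs X'] by auto
  have cY: "length Ys = N" "\<forall>a\<in>set Ys. a \<in> carrier_mat n n" using Dmem[OF fs Y'] by auto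
  define As where "As = map2 (\<lambda>a b. four_block_mat a (0\<^sub>m n n) (0\<^sub>m n n) b) Xs Ys"
  have Ae: "tsum (n, Xs) (n, Ys) = (n+n, As)" by (simp add: tsum_def As_def)
  have A: "(n+n, As) \<in> D" using fs X' Y' Ae unfolding free_set_def by metis
  have lA: "length As = N" using cX cY by (simp add: As_def)
  have Ak: "As ! k = four_block_mat (Xs!k) (0\<^sub>m n n) (0\<^sub>m n n) (Ys!k)" if "k < N" for k
    using that cX cY by (simp add: As_def)
  have cXk: "Xs!k \<in> carrier_mat n n" and cYk: "Ys!k \<in> carrier_mat n n" if "k < N" for k
    using that cX cY by auto
  define G :: "'a mat" where "G = four_block_mat (0\<^sub>m n n) (1\<^sub>m n) (0\<^sub>m n n) (0\<^sub>m n n)"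
  have G: "G \<in> carrier_mat (n+n) (n+n)" unfolding G_def by auto
  define H where "H = (n+n, map (\<lambda>a. a * G - G * a) As)"
  have Hk: "snd H ! k = four_block_mat (0\<^sub>m n n) (Xs!k - Ys!k) (0\<^sub>m n n) (0\<^sub>m n n)" if "k < N" for k
    using that lA Ak[OF that] diagG[OF cXk[OF that] cYk[OF that]] by (simp add: H_def G_def)
  have HT: "H \<in> tuples N"
  proof -
    have "\<forall>h\<in>set (snd H). h \<in> carrier_mat (n+n) (n+n)"
    proof
      fix h assume "h \<in> set (snd H)"
      then obtain k where k: "k < N" "h = snd H ! k" using lA by (auto simp: H_def in_set_conv_nth)
      show "h \<in> carrier_mat (n+n) (n+n)" using Hk[OF k(1)] k cXk[OF k(1)] cYk[OF k(1)]
        by (simp add: minus_carrier_mat)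
    qed
    thus ?thesis using lA by (simp add: H_def tuples_mem)
  qed
  have KEY: "(n+n+(n+n), map2 (\<lambda>a b. four_block_mat a (a*G - G*b) (0\<^sub>m (n+n) (n+n)) b) As As) \<in> D \<and>
    f (n+n+(n+n), map2 (\<lambda>a b. four_block_mat a (a*G - G*b) (0\<^sub>m (n+n) (n+n)) b) As As) =
    (n+n+(n+n), map2 (\<lambda>a b. four_block_mat a (a*G - G*b) (0\<^sub>m (n+n) (n+n)) b) (snd (f (n+n, As))) (snd (f (n+n, As))))"
    by (rule key[OF fm A A G])
  have TB: "tblock (n+n, As) H = (n+n+(n+n), map2 (\<lambda>a b. four_block_mat a (a*G - G*b) (0\<^sub>m (n+n) (n+n)) b) As As)"
    unfolding tblock_def H_def by (auto intro!: nth_equalityI)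
  obtain Ps where Ps: "f (n, Xs) = (n, Ps)" "length Ps = Nh" "\<forall>a\<in>set Ps. a \<in> carrier_mat n n"
    using fval[OF fm X'] by auto
  have fY: "f (n, Ys) = (n, Ps)" using fXY Xe Ye nn Ps by simp
  have fA: "f (n+n, As) = (n+n, map2 (\<lambda>a b. four_block_mat a (0\<^sub>m n n) (0\<^sub>m n n) b) Ps Ps)"
    using fsum[OF fm X' Y'] Ae Ps fY by (simp add: tsum_def)
  have DF: "Dfree f (n+n, As) H = tzero Nh (n+n)"
  proof -
    have "snd (f (tblock (n+n, As) H)) = map2 (\<lambda>a b. four_block_mat a (a*G - G*b) (0\<^sub>m (n+n) (n+n)) b)
       (map2 (\<lambda>a b. four_block_mat a (0\<^sub>m n n) (0\<^sub>m n n) b) Ps Ps) (map2 (\<lambda>a b. four_block_mat a (0\<^sub>m n n) (0\<^sub>m n n) b) Ps Ps)"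
      using KEY TB fA by simp
    moreover have "map (\<lambda>B. mat (n+n) (n+n) (\<lambda>(i, j). B $$ (i, j + (n+n)))) (map2 (\<lambda>a b. four_block_mat a (a*G - G*b) (0\<^sub>m (n+n) (n+n)) b)
       (map2 (\<lambda>a b. four_block_mat a (0\<^sub>m n n) (0\<^sub>m n n) b) Ps Ps) (map2 (\<lambda>a b. four_block_mat a (0\<^sub>m n n) (0\<^sub>m n n) b) Ps Ps))
       = replicate Nh (0\<^sub>m (n+n) (n+n))"
    proof (rule nth_equalityI)
      fix j assume "j < length (map (\<lambda>B. mat (n+n) (n+n) (\<lambda>(i, j). B $$ (i, j + (n+n)))) (map2 (\<lambda>a b. four_block_mat a (a*G - G*b) (0\<^sub>m (n+n) (n+n)) b)
       (map2 (\<lambda>a b. four_block_mat a (0\<^sub>m n n) (0\<^sub>m n n) b) Ps Ps) (map2 (\<lambda>a b. four_block_mat a (0\<^sub>m n n) (0\<^sub>m n n) b) Ps Ps)))"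
      hence j: "j < Nh" using Ps by simp
      have pj: "Ps!j \<in> carrier_mat n n" using Ps j by auto
      let ?d = "four_block_mat (Ps!j) (0\<^sub>m n n) (0\<^sub>m n n) (Ps!j)"
      have d: "?d \<in> carrier_mat (n+n) (n+n)" using pj by auto
      have z: "?d * G - G * ?d = 0\<^sub>m (n+n) (n+n)"
        using diagG[OF pj pj] pj unfolding G_def by (simp flip: four_block_zero_mat)
      have "mat (n+n) (n+n) (\<lambda>(i, j'). four_block_mat ?d (?d * G - G * ?d) (0\<^sub>m (n+n) (n+n)) ?d $$ (i, j' + (n+n))) = ?d * G - G * ?d"
        by (rule block_ur[OF d d]) (simp add: z)
      thus "map (\<lambda>B. mat (n+n) (n+n) (\<lambda>(i, j). B $$ (i, j + (n+n)))) (map2 (\<lambda>a b. four_block_mat a (a*G - G*b) (0\<^sub>m (n+n) (n+n)) b)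
       (map2 (\<lambda>a b. four_block_mat a (0\<^sub>m n n) (0\<^sub>m n n) b) Ps Ps) (map2 (\<lambda>a b. four_block_mat a (0\<^sub>m n n) (0\<^sub>m n n) b) Ps Ps)) ! j
        = replicate Nh (0\<^sub>m (n+n) (n+n)) ! j" using j Ps z by simp
    qed (simp add: Ps)
    ultimately show ?thesis unfolding Dfree_def tzero_def Let_def by simp
  qed
  have "H = tzero N (n+n)" using P A HT DF TB KEY by (auto simp: H_def)
  hence Hz: "snd H ! k = 0\<^sub>m (n+n) (n+n)" if "k < N" for k using that by (simp add: tzero_def)
  have "Xs ! k = Ys ! k" if k: "k < N" for k
  proof -
    have "four_block_mat (0\<^sub>m n n) (Xs!k - Ys!k) (0\<^sub>m n n) (0\<^sub>m n n) = four_block_mat (0\<^sub>m n n) (0\<^sub>m n n) (0\<^sub>m n n) (0\<^sub>m n n)"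
      using Hk[OF k] Hz[OF k] by simp
    from block_eq[OF zero_carrier_mat zero_carrier_mat _ zero_carrier_mat zero_carrier_mat zero_carrier_mat zero_carrier_mat zero_carrier_mat this]
    have "Xs!k - Ys!k = 0\<^sub>m n n" using cXk[OF k] cYk[OF k] by (simp add: minus_carrier_mat)
    thus ?thesis using minus_zero_eq[OF cXk[OF k] cYk[OF k]] by simp
  qed
  hence "Xs = Ys" using cX cY by (intro nth_equalityI) auto
  thus "X = Y" using Xe Ye nn by simp
qed


lemma part21:
  fixes D :: "'a::ring_1 tup set" and f :: "'a tup \<Rightarrow> 'a tup"
  assumes fm: "free_map N Nh D f" and inj: "inj_on f D"
    and X: "X \<in> D" and HT: "H \<in> tuples N" and fH: "fst H = fst X" and ZD: "tblock X H \<in> D"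
    and DF: "Dfree f X H = tzero Nh (fst X)"
  shows "H = tzero N (fst X)"
proof -
  have fs: "free_set N D" using fm unfolding free_map_def by auto
  obtain n Xs where Xe: "X = (n, Xs)" by (cases X)
  obtain Hs where He: "H = (n, Hs)" using fH Xe by (cases H) auto
  have X': "(n, Xs) \<in> D" using X Xe by simp
  have cX: "length Xs = N" "\<forall>a\<in>set Xs. a \<in> carrier_mat n n" using Dmem[OF fs X'] by auto
  have cH: "length Hs = N" "\<forall>a\<in>set Hs. a \<in> carrier_mat n n" using HT He by (auto simp: tuples_mem)
  have cXk: "Xs!k \<in> carrier_mat n n" and cHk: "Hs!k \<in> carrier_mat n n" if "k < N" for k
    using that cX cH by auto
  define Zs where "Zs = map2 (\<lambda>a h. four_block_mat a h (0\<^sub>m n n) a) Xs Hs"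
  define Ws where "Ws = map2 (\<lambda>a b. four_block_mat a (0\<^sub>m n n) (0\<^sub>m n n) b) Xs Xs"
  have Zeq: "tblock X H = (n+n, Zs)" unfolding tblock_def Xe He Zs_def by simp
  have Z: "(n+n, Zs) \<in> D" using ZD Zeq by simp
  have Weq: "tsum X X = (n+n, Ws)" unfolding tsum_def Xe Ws_def by simp
  have W: "(n+n, Ws) \<in> D" using fs X Weq unfolding free_set_def by metis
  have Zk: "Zs!k = four_block_mat (Xs!k) (Hs!k) (0\<^sub>m n n) (Xs!k)" if "k < N" for k
    using that cX cH by (simp add: Zs_def)
  have Wk: "Ws!k = four_block_mat (Xs!k) (0\<^sub>m n n) (0\<^sub>m n n) (Xs!k)" if "k < N" for k
    using that cX by (simp add: Ws_def)
  define G1 :: "'a mat" where "G1 = four_block_mat (1\<^sub>m n) (0\<^sub>m n n) (0\<^sub>m n n) (0\<^sub>m n n)"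
  define G2 :: "'a mat" where "G2 = four_block_mat (0\<^sub>m n n) (0\<^sub>m n n) (0\<^sub>m n n) (1\<^sub>m n)"
  have cG1: "G1 \<in> carrier_mat (n+n) (n+n)" and cG2: "G2 \<in> carrier_mat (n+n) (n+n)" unfolding G1_def G2_def by auto
  have I1: "\<forall>k < N. Zs!k * G1 = G1 * Ws!k"
    using Zk Wk G1[OF cXk cHk] unfolding G1_def by simp
  have I2: "\<forall>k < N. Ws!k * G2 = G2 * Zs!k"
    using Zk Wk G2[OF cXk cHk] unfolding G2_def by simp
  obtain Ps where Ps: "f (n, Xs) = (n, Ps)" "length Ps = Nh" "\<forall>a\<in>set Ps. a \<in> carrier_mat n n"
    using fval[OF fm X'] by auto
  have fW: "f (n+n, Ws) = (n+n, map2 (\<lambda>a b. four_block_mat a (0\<^sub>m n n) (0\<^sub>m n n) b) Ps Ps)"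
    using fsum[OF fm X X] Weq Xe Ps by (simp add: tsum_def)
  obtain Zs' where Zs': "f (n+n, Zs) = (n+n, Zs')" "length Zs' = Nh" "\<forall>a\<in>set Zs'. a \<in> carrier_mat (n+n) (n+n)"
    using fval[OF fm Z] by auto
  have DFj: "mat n n (\<lambda>(i, j). Zs'!l $$ (i, j + n)) = 0\<^sub>m n n" if l: "l < Nh" for l
  proof -
    have "map (\<lambda>B. mat n n (\<lambda>(i, j). B $$ (i, j + n))) Zs' = replicate Nh (0\<^sub>m n n)"
      using DF Zeq Zs' Xe unfolding Dfree_def tzero_def Let_def by simp
    hence "map (\<lambda>B. mat n n (\<lambda>(i, j). B $$ (i, j + n))) Zs' ! l = replicate Nh (0\<^sub>m n n) ! l" by simp
    thus ?thesis using l Zs' by simp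
  qed
  have "Zs' ! l = map2 (\<lambda>a b. four_block_mat a (0\<^sub>m n n) (0\<^sub>m n n) b) Ps Ps ! l" if l: "l < Nh" for l
  proof -
    obtain p q r s where sb: "split_block (Zs'!l) n n = (p, q, r, s)" by (metis prod_cases4)
    have cZ: "Zs'!l \<in> carrier_mat (n+n) (n+n)" using Zs' l by auto
    note spl = split_block[OF sb, of n n] 
    have cp: "p \<in> carrier_mat n n" "q \<in> carrier_mat n n" "r \<in> carrier_mat n n" "s \<in> carrier_mat n n"
      and Zl: "Zs'!l = four_block_mat p q r s" using spl cZ by auto
    have u: "Ps!l \<in> carrier_mat n n" using Ps l by auto
    have e1: "Zs'!l * G1 = G1 * (map2 (\<lambda>a b. four_block_mat a (0\<^sub>m n n) (0\<^sub>m n n) b) Ps Ps ! l)"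
      using intw[OF fm Z W cG1 I1 l] Zs' fW by simp
    have e2: "(map2 (\<lambda>a b. four_block_mat a (0\<^sub>m n n) (0\<^sub>m n n) b) Ps Ps ! l) * G2 = G2 * Zs'!l"
      using intw[OF fm W Z cG2 I2 l] Zs' fW by simp
    have m: "map2 (\<lambda>a b. four_block_mat a (0\<^sub>m n n) (0\<^sub>m n n) b) Ps Ps ! l = four_block_mat (Ps!l) (0\<^sub>m n n) (0\<^sub>m n n) (Ps!l)"
      using l Ps by simp
    have pr: "p = Ps!l \<and> r = 0\<^sub>m n n" using G1r[OF cp u] e1 unfolding Zl m G1_def by simp
    have ss: "s = Ps!l" using G2r[OF cp u] e2 unfolding Zl m G2_def by simp
    have "q = mat n n (\<lambda>(i, j). Zs'!l $$ (i, j + n))" unfolding Zl using block_ur[OF cp(1) cp(4) cp(2)] by simp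
    hence "q = 0\<^sub>m n n" using DFj[OF l] by simp
    thus ?thesis using Zl pr ss m by simp
  qed
  hence "Zs' = map2 (\<lambda>a b. four_block_mat a (0\<^sub>m n n) (0\<^sub>m n n) b) Ps Ps"
    using Zs' Ps by (intro nth_equalityI) auto
  hence "f (n+n, Zs) = f (n+n, Ws)" using Zs'(1) fW by simp
  hence ZW: "Zs = Ws" using inj_onD[OF inj _ Z W] by simp
  have "Hs ! k = 0\<^sub>m n n" if k: "k < N" for k
  proof -
    have "four_block_mat (Xs!k) (Hs!k) (0\<^sub>m n n) (Xs!k) = four_block_mat (Xs!k) (0\<^sub>m n n) (0\<^sub>m n n) (Xs!k)"
      using Zk[OF k] Wk[OF k] ZW by simp
    from block_eq[OF cXk[OF k] cXk[OF k] cHk[OF k] zero_carrier_mat cXk[OF k] cXk[OF k] zero_carrier_mat zero_carrier_mat this]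
    show ?thesis by simp
  qed
  hence "Hs = replicate N (0\<^sub>m n n)" using cH by (intro nth_equalityI) auto
  thus ?thesis using He Xe by (simp add: tzero_def)
qed


theorem mainTheorem1:
  fixes D :: "'a::ring_1 tup set" and f :: "'a tup \<Rightarrow> 'a tup" and N Nh :: nat
  assumes "free_set N D" and "free_map N Nh D f"
  shows "((\<forall>X \<in> D. \<forall>H \<in> tuples N. fst H = fst X \<longrightarrow> tblock X H \<in> D \<longrightarrow>
              Dfree f X H = tzero Nh (fst X) \<longrightarrow> H = tzero N (fst X))
          \<longleftrightarrow> inj_on f D)
       \<and> (inj_on f D \<longleftrightarrow> (inj_on f D \<and> free_map Nh N (f ` D) (the_inv_into D f)))"
  using part12[OF assms(2)] part21[OF assms(2)] part23[OF assms(2)] by blast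

end
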